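(* Let $s\in(0,1)$, $\mu$ a nonnegative finite measure on $S^{d-1}$, and $\Omega\subset\mathbb{R}^d$ open and bounded. If $u\in L^1(\Omega)\cap L^1(\mathbb{R}^d,\nu^\star(x)\,dx)$ and $\eta\in C_c^\infty(\Omega)$, then $(u,A_s\eta)_{L^2(\mathbb{R}^d)}=\int_{\mathbb{R}^d}u(x)A_s\eta(x)\,dx$ exists (the integrand is integrable).
   Context: $A_s u(x)=\lim_{\kappa\to0+}\int_{\{|r|\ge\kappa\}}\int_{S^{d-1}}\frac{u(x)-u(x+r\theta)}{|r|^{1+2s}}\,\mu(d\theta)\,dr$. $\nu^\star(x)=\int_{\mathbb{R}}\int_{S^{d-1}}\mathbf{1}_\Omega(x+r\theta)(1+|r|)^{-1-2s}\,\mu(d\theta)\,dr$. *)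

theory Defs
  imports "HOL-Analysis.Analysis"
begin

fun dderiv :: "'a::euclidean_space list \<Rightarrow> ('a \<Rightarrow> real) \<Rightarrow> 'a \<Rightarrow> real" where
  "dderiv [] f = f"
| "dderiv (v # vs) f = (\<lambda>x. frechet_derivative (dderiv vs f) (at x) v)"

definition smooth :: "('a::euclidean_space \<Rightarrow> real) \<Rightarrow> bool" where
  "smooth f \<longleftrightarrow> (\<forall>vs x. dderiv vs f differentiable (at x))"

definition Cc_inf :: "'a::euclidean_space set \<Rightarrow> ('a \<Rightarrow> real) \<Rightarrow> bool" where
  "Cc_inf \<Omega> \<eta> \<longleftrightarrow> smooth \<eta> \<and> compact (closure {x. \<eta> x \<noteq> 0})
      \<and> closure {x. \<eta> x \<noteq> 0} \<subseteq> \<Omega>"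

definition A_op :: "real \<Rightarrow> 'a::euclidean_space measure \<Rightarrow> ('a \<Rightarrow> real) \<Rightarrow> 'a \<Rightarrow> real" where
  "A_op s \<mu> u x = Lim (at_right 0) (\<lambda>\<kappa>.
     LINT r:{r. \<bar>r\<bar> \<ge> \<kappa>}|lborel.
       (LINT \<theta>|\<mu>. (u x - u (x + r *\<^sub>R \<theta>)) / \<bar>r\<bar> powr (1 + 2 * s)))"

definition nu_star :: "real \<Rightarrow> 'a::euclidean_space measure \<Rightarrow> 'a set \<Rightarrow> 'a \<Rightarrow> real" where
  "nu_star s \<mu> \<Omega> x = (LINT r|lborel.
     (LINT \<theta>|\<mu>. indicator \<Omega> (x + r *\<^sub>R \<theta>) * (1 + \<bar>r\<bar>) powr (-1 - 2 * s)))"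

end

theory Submission
  imports Defs
begin


lemma dderiv_zero_outside:
  assumes "open U" "\<forall>y\<in>U. f y = 0" "x \<in> U"
  shows "dderiv vs f x = 0"
  using assms(3)
proof (induction vs arbitrary: x)
  case Nil then show ?case using assms by simp
next
  case (Cons v vs)
  have "((\<lambda>_. 0) has_derivative (\<lambda>_. 0)) (at x)" by simp
  then have "(dderiv vs f has_derivative (\<lambda>_. 0)) (at x)"
    by (rule has_derivative_transform_within_open[OF _ assms(1) Cons.prems]) (use Cons.IH in auto)
  then have "frechet_derivative (dderiv vs f) (at x) = (\<lambda>_. 0)"
    by (metis frechet_derivative_at)
  then show ?case by simp
qed

lemma line_deriv:
  fixes f :: "'a::euclidean_space \<Rightarrow> real"
  assumes "\<And>y. f differentiable (at y)"
  shows "((\<lambda>t. f (x + t *\<^sub>R h)) has_real_derivative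
     (\<Sum>b\<in>Basis. (h \<bullet> b) * frechet_derivative f (at (x + t *\<^sub>R h)) b)) (at t)"
proof -
  let ?D = "frechet_derivative f (at (x + t *\<^sub>R h))"
  have fd: "(f has_derivative ?D) (at (x + t *\<^sub>R h))"
    using assms frechet_derivative_works by blast
  have lin: "linear ?D" using fd has_derivative_linear by blast
  have l: "((\<lambda>t. x + t *\<^sub>R h) has_derivative (\<lambda>dt. dt *\<^sub>R h)) (at t)"
    by (auto intro!: derivative_eq_intros)
  have "((\<lambda>t. f (x + t *\<^sub>R h)) has_derivative (\<lambda>dt. ?D (dt *\<^sub>R h))) (at t)"
    using diff_chain_at[OF l fd] by (simp add: o_def)
  moreover have "?D (dt *\<^sub>R h) = dt * (\<Sum>b\<in>Basis. (h \<bullet> b) * ?D b)" for dt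
  proof -
    have "?D (dt *\<^sub>R h) = dt * ?D h" using lin by (simp add: linear_scale)
    also have "?D h = ?D (\<Sum>b\<in>Basis. (h \<bullet> b) *\<^sub>R b)" by (simp add: euclidean_representation)
    also have "\<dots> = (\<Sum>b\<in>Basis. (h \<bullet> b) * ?D b)" using lin by (simp add: linear_sum linear_scale)
    finally show ?thesis .
  qed
  moreover have "(\<lambda>dt. dt * c) = (*) c" for c :: real by (auto simp: fun_eq_iff)
  ultimately show ?thesis
    by (simp add: has_field_derivative_def)
qed

lemma second_diff_bound:
  fixes \<phi> \<phi>1 \<phi>2 :: "real \<Rightarrow> real"
  assumes "\<And>t. (\<phi> has_real_derivative \<phi>1 t) (at t)"
    and "\<And>t. (\<phi>1 has_real_derivative \<phi>2 t) (at t)"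
    and "\<And>t. \<bar>\<phi>2 t\<bar> \<le> K"
  shows "\<bar>\<phi> 1 + \<phi> (-1) - 2 * \<phi> 0\<bar> \<le> 2 * K"
proof -
  define \<psi> where "\<psi> t = \<phi> t + \<phi> (-t)" for t
  have d\<psi>: "(\<psi> has_real_derivative (\<phi>1 t - \<phi>1 (-t))) (at t)" for t
  proof -
    have "((\<lambda>z. \<phi> (-z)) has_real_derivative \<phi>1 (-t) * (-1)) (at t)"
      by (rule DERIV_chain2[OF assms(1)]) (auto intro!: derivative_eq_intros)
    from DERIV_add[OF assms(1) this] show ?thesis unfolding \<psi>_def by simp
  qed
  obtain z where z: "0 < z" "z < 1" "\<psi> 1 - \<psi> 0 = (1 - 0) * (\<phi>1 z - \<phi>1 (-z))"
    using MVT2[of 0 1 \<psi> "\<lambda>t. \<phi>1 t - \<phi>1 (-t)"] d\<psi> by auto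
  obtain w where w: "\<phi>1 z - \<phi>1 (-z) = (z - (-z)) * \<phi>2 w"
    using MVT2[of "-z" z \<phi>1 \<phi>2] assms(2) z by auto
  have "\<bar>\<phi> 1 + \<phi> (-1) - 2 * \<phi> 0\<bar> = \<bar>(2*z) * \<phi>2 w\<bar>"
    using z w unfolding \<psi>_def by simp
  also have "\<dots> = 2 * z * \<bar>\<phi>2 w\<bar>" using z by (simp add: abs_mult)
  also have "\<dots> \<le> 2 * 1 * K"
    using z assms(3)[of w] by (intro mult_mono) auto
  finally show ?thesis by simp
qed

lemma Cc_inf_dderiv_bounded:
  assumes "Cc_inf \<Omega> \<eta>"
  shows "\<exists>B\<ge>0. \<forall>y. \<bar>dderiv vs \<eta> y\<bar> \<le> B"
proof -
  let ?S = "closure {x. \<eta> x \<noteq> 0}"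
  have sm: "\<And>vs x. dderiv vs \<eta> differentiable (at x)" and cpt: "compact ?S"
    using assms unfolding Cc_inf_def smooth_def by auto
  have "continuous_on ?S (dderiv vs \<eta>)"
    using sm by (intro continuous_at_imp_continuous_on ballI differentiable_imp_continuous_within) auto
  then have "compact (dderiv vs \<eta> ` ?S)" using cpt by (rule compact_continuous_image)
  then have "bounded (dderiv vs \<eta> ` ?S)" by (rule compact_imp_bounded)
  then obtain b where b: "b > 0" "\<forall>z\<in>dderiv vs \<eta> ` ?S. norm z \<le> b"
    unfolding bounded_pos by blast
  have "\<bar>dderiv vs \<eta> y\<bar> \<le> b" for y
  proof (cases "y \<in> ?S")
    case True then show ?thesis using b by auto
  next
    case False
    note nS = this
    have z: "\<forall>z\<in>- ?S. \<eta> z = 0" using closure_subset[of "{x. \<eta> x \<noteq> 0}"] by blast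
    have "dderiv vs \<eta> y = 0"
    proof (rule dderiv_zero_outside[of "- ?S"])
      show "open (- ?S)" by (intro open_Compl closed_closure)
      show "\<forall>y\<in>- ?S. \<eta> y = 0" by (rule z)
      show "y \<in> - ?S" using nS by (rule ComplI[OF notE])
    qed
    then show ?thesis using b by simp
  qed
  then show ?thesis using b by (intro exI[of _ b]) auto
qed

lemma Cc_inf_second_diff:
  fixes \<eta> :: "'a::euclidean_space \<Rightarrow> real"
  assumes "Cc_inf \<Omega> \<eta>"
  shows "\<exists>M\<ge>0. \<forall>x h. \<bar>\<eta> (x + h) + \<eta> (x + (-1) *\<^sub>R h) - 2 * \<eta> x\<bar> \<le> M * (norm h)\<^sup>2"
proof -
  have sm: "\<And>vs x. dderiv vs \<eta> differentiable (at x)"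
    using assms unfolding Cc_inf_def smooth_def by auto
  have "\<forall>vs. \<exists>B. B \<ge> 0 \<and> (\<forall>y. \<bar>dderiv vs \<eta> y\<bar> \<le> B)"
    using Cc_inf_dderiv_bounded[OF assms] by blast
  then obtain B where B: "\<And>vs. B vs \<ge> 0" "\<And>vs y. \<bar>dderiv vs \<eta> y\<bar> \<le> B vs"
    by metis
  define M where "M = (\<Sum>b\<in>Basis. \<Sum>c\<in>(Basis::'a set). B [c, b])"
  have M0: "M \<ge> 0" unfolding M_def using B by (intro sum_nonneg) auto
  have "\<bar>\<eta> (x + h) + \<eta> (x + (-1) *\<^sub>R h) - 2 * \<eta> x\<bar> \<le> 2 * (M * (norm h)\<^sup>2)" for x h
  proof -
    define \<phi> where "\<phi> t = \<eta> (x + t *\<^sub>R h)" for t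
    define \<phi>1 where "\<phi>1 t = (\<Sum>b\<in>Basis. (h \<bullet> b) * dderiv [b] \<eta> (x + t *\<^sub>R h))" for t
    define \<phi>2 where "\<phi>2 t = (\<Sum>b\<in>Basis. (h \<bullet> b) * (\<Sum>c\<in>Basis. (h \<bullet> c) * dderiv [c, b] \<eta> (x + t *\<^sub>R h)))" for t
    have d1: "(\<phi> has_real_derivative \<phi>1 t) (at t)" for t
      unfolding \<phi>_def \<phi>1_def using line_deriv[of \<eta> x h t] sm[of "[]"] by simp
    have d2: "(\<phi>1 has_real_derivative \<phi>2 t) (at t)" for t
      unfolding \<phi>1_def \<phi>2_def
    proof (intro DERIV_sum DERIV_cmult)
      fix n :: 'a
      have "\<And>y. dderiv [n] \<eta> differentiable (at y)" using sm by blast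
      from line_deriv[of "dderiv [n] \<eta>" x h t, OF this]
      show "((\<lambda>t. dderiv [n] \<eta> (x + t *\<^sub>R h)) has_real_derivative (\<Sum>c\<in>Basis. h \<bullet> c * dderiv [c, n] \<eta> (x + t *\<^sub>R h))) (at t)"
        by simp
    qed
    have b2: "\<bar>\<phi>2 t\<bar> \<le> M * (norm h)\<^sup>2" for t
    proof -
      have "\<bar>\<phi>2 t\<bar> \<le> (\<Sum>b\<in>Basis. \<Sum>c\<in>(Basis::'a set). \<bar>(h \<bullet> b) * ((h \<bullet> c) * dderiv [c, b] \<eta> (x + t *\<^sub>R h))\<bar>)"
        unfolding \<phi>2_def sum_distrib_left
        by (rule order_trans[OF sum_abs]) (intro sum_mono sum_abs)
      also have "\<dots> \<le> (\<Sum>b\<in>Basis. \<Sum>c\<in>(Basis::'a set). (norm h)\<^sup>2 * B [c, b])"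
      proof (intro sum_mono)
        fix b c :: 'a assume bc: "b \<in> Basis" "c \<in> Basis"
        have "\<bar>(h \<bullet> b) * ((h \<bullet> c) * dderiv [c, b] \<eta> (x + t *\<^sub>R h))\<bar>
           = \<bar>h \<bullet> b\<bar> * (\<bar>h \<bullet> c\<bar> * \<bar>dderiv [c, b] \<eta> (x + t *\<^sub>R h)\<bar>)" by (simp add: abs_mult)
        also have "\<dots> \<le> norm h * (norm h * B [c, b])"
          using Basis_le_norm[OF bc(1), of h] Basis_le_norm[OF bc(2), of h] B(1) B(2)[of "[c, b]" "x + t *\<^sub>R h"]
          by (intro mult_mono) (auto simp del: dderiv.simps)
        finally show "\<bar>(h \<bullet> b) * ((h \<bullet> c) * dderiv [c, b] \<eta> (x + t *\<^sub>R h))\<bar> \<le> (norm h)\<^sup>2 * B [c, b]"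
          by (simp add: power2_eq_square)
      qed
      also have "\<dots> = (norm h)\<^sup>2 * M" unfolding M_def by (simp only: sum_distrib_left)
      finally show ?thesis by (simp only: mult.commute)
    qed
    have e: "\<phi> 1 = \<eta> (x + h)" "\<phi> (-1) = \<eta> (x + (-1) *\<^sub>R h)" "\<phi> 0 = \<eta> x"
      by (simp_all only: \<phi>_def) simp_all
    from second_diff_bound[OF d1 d2 b2] show ?thesis unfolding e .
  qed
  note * = this
  show ?thesis
  proof (intro exI[of _ "2 * M"] conjI allI)
    show "0 \<le> 2 * M" using M0 by simp
    fix x h
    show "\<bar>\<eta> (x + h) + \<eta> (x + (-1) *\<^sub>R h) - 2 * \<eta> x\<bar> \<le> 2 * M * (norm h)\<^sup>2"
      using *[of x h] by (metis mult.assoc)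
  qed
qed



locale pv_ctx =
  fixes s :: real and \<mu> :: "'a::euclidean_space measure" and \<eta> :: "'a \<Rightarrow> real" and N M :: real
  assumes s0: "0 < s" and s1: "s < 1" and fm: "finite_measure \<mu>" and sets_mu: "sets \<mu> = sets borel"
    and sph: "AE \<theta> in \<mu>. norm \<theta> = 1"
    and cont: "continuous_on UNIV \<eta>" and Nb: "\<And>x. \<bar>\<eta> x\<bar> \<le> N"
    and Mb: "\<And>x h. \<bar>\<eta> (x + h) + \<eta> (x + (-1) *\<^sub>R h) - 2 * \<eta> x\<bar> \<le> M * (norm h)\<^sup>2"
    and M0: "0 \<le> M"
begin

lemmas [measurable_cong] = sets_mu

lemma eta_meas[measurable]: "\<eta> \<in> borel_measurable borel"
  using cont by (rule borel_measurable_continuous_onI)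

interpretation mu: finite_measure \<mu> by (rule fm)

definition I where "I x r = (LINT \<theta>|\<mu>. (\<eta> x - \<eta> (x + r *\<^sub>R \<theta>)) / \<bar>r\<bar> powr (1 + 2 * s))"

lemma I_meas2: "(\<lambda>(x, r). I x r) \<in> borel_measurable (lborel \<Otimes>\<^sub>M lborel)"
  unfolding I_def by measurable

lemma N0: "0 \<le> N" using Nb[of 0] by simp

abbreviation "mS \<equiv> measure \<mu> (space \<mu>)"

lemma mS0: "0 \<le> mS" by simp

lemma I_int: "integrable \<mu> (\<lambda>\<theta>. (\<eta> x - \<eta> (x + r *\<^sub>R \<theta>)) / \<bar>r\<bar> powr (1 + 2 * s))"
proof (rule mu.integrable_const_bound[where B = "2 * N / \<bar>r\<bar> powr (1 + 2 * s)"])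
  show "AE \<theta> in \<mu>. norm ((\<eta> x - \<eta> (x + r *\<^sub>R \<theta>)) / \<bar>r\<bar> powr (1 + 2 * s)) \<le> 2 * N / \<bar>r\<bar> powr (1 + 2 * s)"
  proof (intro AE_I2)
    fix \<theta>
    have "\<bar>\<eta> x - \<eta> (x + r *\<^sub>R \<theta>)\<bar> \<le> 2 * N" using Nb[of x] Nb[of "x + r *\<^sub>R \<theta>"] by linarith
    then show "norm ((\<eta> x - \<eta> (x + r *\<^sub>R \<theta>)) / \<bar>r\<bar> powr (1 + 2 * s)) \<le> 2 * N / \<bar>r\<bar> powr (1 + 2 * s)"
      by (simp add: divide_right_mono)
  qed
qed measurable

lemma I_bound: "\<bar>I x r\<bar> \<le> mS * (2 * N / \<bar>r\<bar> powr (1 + 2 * s))"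
proof -
  have "\<bar>I x r\<bar> \<le> (LINT \<theta>|\<mu>. norm ((\<eta> x - \<eta> (x + r *\<^sub>R \<theta>)) / \<bar>r\<bar> powr (1 + 2 * s)))"
    unfolding I_def using integral_norm_bound by (metis real_norm_def)
  also have "\<dots> \<le> (LINT \<theta>|\<mu>. 2 * N / \<bar>r\<bar> powr (1 + 2 * s))"
  proof (rule integral_mono)
    show "integrable \<mu> (\<lambda>\<theta>. norm ((\<eta> x - \<eta> (x + r *\<^sub>R \<theta>)) / \<bar>r\<bar> powr (1 + 2 * s)))"
      using I_int by (rule integrable_norm)
    fix \<theta>
    have "\<bar>\<eta> x - \<eta> (x + r *\<^sub>R \<theta>)\<bar> \<le> 2 * N" using Nb[of x] Nb[of "x + r *\<^sub>R \<theta>"] by linarith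
    then show "norm ((\<eta> x - \<eta> (x + r *\<^sub>R \<theta>)) / \<bar>r\<bar> powr (1 + 2 * s)) \<le> 2 * N / \<bar>r\<bar> powr (1 + 2 * s)"
      by (simp add: divide_right_mono)
  qed simp
  also have "\<dots> = mS * (2 * N / \<bar>r\<bar> powr (1 + 2 * s))" by simp
  finally show ?thesis .
qed

definition J where "J x r = I x r + I x (-r)"

lemma J_eq: "J x r = (LINT \<theta>|\<mu>. (2 * \<eta> x - \<eta> (x + r *\<^sub>R \<theta>) - \<eta> (x + (-1) *\<^sub>R (r *\<^sub>R \<theta>))) / \<bar>r\<bar> powr (1 + 2 * s))"
proof -
  have "J x r = (LINT \<theta>|\<mu>. (\<eta> x - \<eta> (x + r *\<^sub>R \<theta>)) / \<bar>r\<bar> powr (1 + 2 * s) + (\<eta> x - \<eta> (x + (-r) *\<^sub>R \<theta>)) / \<bar>-r\<bar> powr (1 + 2 * s))"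
    unfolding J_def I_def using Bochner_Integration.integral_add[OF I_int[of x r] I_int[of x "-r"]] by simp
  also have "\<dots> = (LINT \<theta>|\<mu>. (2 * \<eta> x - \<eta> (x + r *\<^sub>R \<theta>) - \<eta> (x + (-1) *\<^sub>R (r *\<^sub>R \<theta>))) / \<bar>r\<bar> powr (1 + 2 * s))"
  proof (rule Bochner_Integration.integral_cong[OF refl])
    fix \<theta>
    show "(\<eta> x - \<eta> (x + r *\<^sub>R \<theta>)) / \<bar>r\<bar> powr (1 + 2 * s) + (\<eta> x - \<eta> (x + (-r) *\<^sub>R \<theta>)) / \<bar>-r\<bar> powr (1 + 2 * s)
      = (2 * \<eta> x - \<eta> (x + r *\<^sub>R \<theta>) - \<eta> (x + (-1) *\<^sub>R (r *\<^sub>R \<theta>))) / \<bar>r\<bar> powr (1 + 2 * s)"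
      unfolding abs_minus_cancel scaleR_scaleR add_divide_distrib[symmetric] by simp
  qed
  finally show ?thesis .
qed

lemma J_bound: "\<bar>J x r\<bar> \<le> mS * (M * r\<^sup>2 / \<bar>r\<bar> powr (1 + 2 * s))"
proof -
  let ?f = "\<lambda>\<theta>. (2 * \<eta> x - \<eta> (x + r *\<^sub>R \<theta>) - \<eta> (x + (-1) *\<^sub>R (r *\<^sub>R \<theta>))) / \<bar>r\<bar> powr (1 + 2 * s)"
  have "\<bar>J x r\<bar> = norm (LINT \<theta>|\<mu>. ?f \<theta>)" by (simp only: J_eq real_norm_def)
  also have "\<dots> \<le> (LINT \<theta>|\<mu>. norm (?f \<theta>))" by (rule integral_norm_bound)
  also have "\<dots> \<le> (LINT \<theta>|\<mu>. M * r\<^sup>2 / \<bar>r\<bar> powr (1 + 2 * s))"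
  proof (rule integral_mono_AE)
    show "integrable \<mu> (\<lambda>\<theta>. norm (?f \<theta>))"
    proof (rule integrable_norm, rule mu.integrable_const_bound[where B = "4 * N / \<bar>r\<bar> powr (1 + 2 * s)"])
      show "AE \<theta> in \<mu>. norm (?f \<theta>) \<le> 4 * N / \<bar>r\<bar> powr (1 + 2 * s)"
      proof (intro AE_I2)
        fix \<theta>
        have "\<bar>2 * \<eta> x - \<eta> (x + r *\<^sub>R \<theta>) - \<eta> (x + (-1) *\<^sub>R (r *\<^sub>R \<theta>))\<bar> \<le> 4 * N"
          using Nb[of x] Nb[of "x + r *\<^sub>R \<theta>"] Nb[of "x + (-1) *\<^sub>R (r *\<^sub>R \<theta>)"] by linarith
        then show "norm (?f \<theta>) \<le> 4 * N / \<bar>r\<bar> powr (1 + 2 * s)"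
          by (simp add: divide_right_mono)
      qed
    qed measurable
    show "AE \<theta> in \<mu>. norm (?f \<theta>) \<le> M * r\<^sup>2 / \<bar>r\<bar> powr (1 + 2 * s)"
      using sph
    proof eventually_elim
      fix \<theta> :: 'a assume "norm \<theta> = 1"
      then have nr: "(norm (r *\<^sub>R \<theta>))\<^sup>2 = r\<^sup>2" by simp
      have "\<bar>2 * \<eta> x - \<eta> (x + r *\<^sub>R \<theta>) - \<eta> (x + (-1) *\<^sub>R (r *\<^sub>R \<theta>))\<bar> \<le> M * r\<^sup>2"
      proof -
        have "\<bar>2 * \<eta> x - \<eta> (x + r *\<^sub>R \<theta>) - \<eta> (x + (-1) *\<^sub>R (r *\<^sub>R \<theta>))\<bar>
          = \<bar>\<eta> (x + r *\<^sub>R \<theta>) + \<eta> (x + (-1) *\<^sub>R (r *\<^sub>R \<theta>)) - 2 * \<eta> x\<bar>"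
          by (rule abs_minus_commute[THEN trans]) (rule arg_cong[where f=abs], simp)
        also have "\<dots> \<le> M * (norm (r *\<^sub>R \<theta>))\<^sup>2" by (rule Mb)
        finally show ?thesis using nr by simp
      qed
      then show "norm (?f \<theta>) \<le> M * r\<^sup>2 / \<bar>r\<bar> powr (1 + 2 * s)"
        by (simp add: divide_right_mono)
    qed
  qed simp
  also have "\<dots> = mS * (M * r\<^sup>2 / \<bar>r\<bar> powr (1 + 2 * s))" by simp
  finally show ?thesis .
qed


lemma int_pow_inf:
  fixes a e :: real
  assumes "0 < a" "e < -1"
  shows "integrable lborel (\<lambda>r. indicator {a..} r * r powr e)"
proof -
  have "(\<lambda>x. x powr e) integrable_on {a..}"
    using has_integral_powr_to_inf[OF assms(2,1)] by blast
  then have "(\<lambda>x. x powr e) absolutely_integrable_on {a..}"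
    by (rule nonnegative_absolutely_integrable_1) simp
  then have "integrable (completion lborel) (\<lambda>r. indicator {a..} r *\<^sub>R r powr e)"
    unfolding set_integrable_def .
  then show ?thesis
    by (subst (asm) integrable_completion) auto
qed

lemma int_pow_0:
  fixes e :: real
  assumes "-1 < e"
  shows "integrable lborel (\<lambda>r. indicator {0<..1} r * r powr e)"
proof -
  have "(\<lambda>x. x powr e) integrable_on {0<..1}"
    using integrable_on_powr_from_0'[OF assms] by simp
  then have "(\<lambda>x. x powr e) absolutely_integrable_on {0<..1}"
    by (rule nonnegative_absolutely_integrable_1) simp
  then have "integrable (completion lborel) (\<lambda>r. indicator {0<..1} r *\<^sub>R r powr e)"
    unfolding set_integrable_def .
  then show ?thesis
    by (subst (asm) integrable_completion) auto
qed

definition W where "W r = mS * (M * (indicator {0<..1} r * r powr (1 - 2 * s)) + 4 * N * (indicator {1..} r * r powr (-1 - 2 * s)))"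

lemma W_int: "integrable lborel W"
  unfolding W_def
  using int_pow_0[of "1 - 2 * s"] int_pow_inf[of 1 "-1 - 2 * s"] s0 s1
  by (intro integrable_mult_right Bochner_Integration.integrable_add) auto

lemma W_nonneg: "0 \<le> W r"
  unfolding W_def using M0 N0 by (intro mult_nonneg_nonneg add_nonneg_nonneg) (auto simp: indicator_def)

lemma J_dom: assumes "0 < r" shows "\<bar>J x r\<bar> \<le> W r"
proof (cases "r \<le> 1")
  case True
  have "r\<^sup>2 / \<bar>r\<bar> powr (1 + 2 * s) = r powr (1 - 2 * s)"
  proof -
    have "r\<^sup>2 = r powr 2" using assms by (simp add: powr_realpow)
    then have "r\<^sup>2 / \<bar>r\<bar> powr (1 + 2 * s) = r powr 2 / r powr (1 + 2 * s)" using assms by simp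
    also have "\<dots> = r powr (2 - (1 + 2 * s))" by (rule powr_diff[symmetric])
    finally show ?thesis by simp
  qed
  then have "\<bar>J x r\<bar> \<le> mS * (M * r powr (1 - 2 * s))"
    using J_bound[of x r] by (simp only: times_divide_eq_right[symmetric])
  also have "\<dots> \<le> W r"
    unfolding W_def using True assms M0 N0
    by (intro mult_left_mono) (auto simp: indicator_def)
  finally show ?thesis .
next
  case False
  have "\<bar>J x r\<bar> \<le> \<bar>I x r\<bar> + \<bar>I x (-r)\<bar>" unfolding J_def by (rule abs_triangle_ineq)
  also have "\<dots> \<le> mS * (2 * N / \<bar>r\<bar> powr (1 + 2 * s)) + mS * (2 * N / \<bar>-r\<bar> powr (1 + 2 * s))"
    by (intro add_mono I_bound)
  also have "\<dots> = mS * (4 * N * r powr (-1 - 2 * s))"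
  proof -
    have eq: "r powr (-1 - 2 * s) = 1 / r powr (1 + 2 * s)"
      using powr_minus_divide[of r "1 + 2 * s"] by (simp add: algebra_simps)
    show ?thesis using assms by (simp add: eq)
  qed
  also have "\<dots> \<le> W r"
    unfolding W_def using False assms M0 N0
    by (intro mult_left_mono) (auto simp: indicator_def)
  finally show ?thesis .
qed


lemma I_meas[measurable]: "(\<lambda>r. I x r) \<in> borel_measurable lborel"
  unfolding I_def by measurable

lemma J_meas[measurable]: "(\<lambda>r. J x r) \<in> borel_measurable lborel"
  unfolding J_def by measurable

lemma int_tail:
  assumes k: "0 < \<kappa>" and g[measurable]: "g \<in> borel_measurable lborel"
    and gb: "\<And>r. \<bar>g r\<bar> \<le> C / \<bar>r\<bar> powr (1 + 2 * s)"
  shows "integrable lborel (\<lambda>r. indicator {\<kappa>..} r * g r)"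
proof (rule Bochner_Integration.integrable_bound)
  show "integrable lborel (\<lambda>r. C * (indicator {\<kappa>..} r * r powr (-1 - 2 * s)))"
    using int_pow_inf[OF k, of "-1 - 2 * s"] s0 by (intro integrable_mult_right) auto
  show "AE r in lborel. norm (indicator {\<kappa>..} r * g r) \<le> norm (C * (indicator {\<kappa>..} r * r powr (-1 - 2 * s)))"
  proof (intro AE_I2)
    fix r :: real
    show "norm (indicator {\<kappa>..} r * g r) \<le> norm (C * (indicator {\<kappa>..} r * r powr (-1 - 2 * s)))"
    proof (cases "\<kappa> \<le> r")
      case True
      then have r: "0 < r" using k by simp
      have eq: "r powr (-1 - 2 * s) = 1 / r powr (1 + 2 * s)"
        using powr_minus_divide[of r "1 + 2 * s"] by (simp add: algebra_simps)
      have "\<bar>g r\<bar> \<le> C / r powr (1 + 2 * s)" using gb[of r] r by simp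
      also have "\<dots> \<le> \<bar>C\<bar> / r powr (1 + 2 * s)" by (intro divide_right_mono) auto
      finally show ?thesis using True r by (simp add: eq abs_mult)
    qed simp
  qed
qed measurable

lemma F_eq:
  assumes k: "0 < \<kappa>"
  shows "(LINT r:{r. \<kappa> \<le> \<bar>r\<bar>}|lborel. I x r) = (LINT r|lborel. indicator {\<kappa>..} r * J x r)"
proof -
  have i1: "integrable lborel (\<lambda>r. indicator {\<kappa>..} r * I x r)"
    by (rule int_tail[OF k, where C = "mS * (2 * N)"]) (use I_bound[of x] in \<open>simp_all\<close>)
  have i2: "integrable lborel (\<lambda>r. indicator {\<kappa>..} r * I x (-r))"
    by (rule int_tail[OF k, where C = "mS * (2 * N)"]) (use I_bound[of x "- _"] in \<open>simp_all\<close>)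
  have i3: "integrable lborel (\<lambda>r. indicator {..-\<kappa>} r * I x r)"
    using lborel_integrable_real_affine[OF i2, of "-1" 0]
    by (simp add: indicator_def le_minus_iff)
  have ind: "(indicator {r. \<kappa> \<le> \<bar>r\<bar>} r :: real) = indicator {\<kappa>..} r + indicator {..-\<kappa>} r" for r :: real
    using k by (auto simp: indicator_def)
  have "(LINT r:{r. \<kappa> \<le> \<bar>r\<bar>}|lborel. I x r) = (LINT r|lborel. indicator {\<kappa>..} r * I x r + indicator {..-\<kappa>} r * I x r)"
    unfolding set_lebesgue_integral_def by (simp add: ind distrib_right)
  also have "\<dots> = (LINT r|lborel. indicator {\<kappa>..} r * I x r) + (LINT r|lborel. indicator {..-\<kappa>} r * I x r)"
    by (rule Bochner_Integration.integral_add[OF i1 i3])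
  also have "(LINT r|lborel. indicator {..-\<kappa>} r * I x r) = (LINT r|lborel. indicator {\<kappa>..} r * I x (-r))"
    using lborel_integral_real_affine[of "-1" "\<lambda>r. indicator {..-\<kappa>} r * I x r" 0]
    by (simp add: indicator_def le_minus_iff)
  also have "(LINT r|lborel. indicator {\<kappa>..} r * I x r) + (LINT r|lborel. indicator {\<kappa>..} r * I x (-r))
      = (LINT r|lborel. indicator {\<kappa>..} r * J x r)"
    unfolding J_def distrib_left by (rule Bochner_Integration.integral_add[OF i1 i2, symmetric])
  finally show ?thesis .
qed


definition L where "L x = (LINT r|lborel. indicator {0<..} r * J x r)"

lemma F_tendsto: "((\<lambda>\<kappa>. LINT r:{r. \<kappa> \<le> \<bar>r\<bar>}|lborel. I x r) \<longlongrightarrow> L x) (at_right 0)"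
proof -
  have "((\<lambda>\<kappa>. LINT r|lborel. indicator {\<kappa>..} r * J x r) \<longlongrightarrow> L x) (at_right 0)"
  proof (rule tendsto_at_right_sequentially[of 0 1])
    fix S :: "nat \<Rightarrow> real"
    assume S: "\<And>n. 0 < S n" "\<And>n. S n < 1" "S \<longlonglongrightarrow> 0"
    show "(\<lambda>n. LINT r|lborel. indicator {S n..} r * J x r) \<longlonglongrightarrow> L x"
      unfolding L_def
    proof (rule integral_dominated_convergence[where w = W])
      show "integrable lborel W" by (rule W_int)
      show "AE r in lborel. (\<lambda>n. indicator {S n..} r * J x r) \<longlonglongrightarrow> indicator {0<..} r * J x r"
      proof (intro AE_I2)
        fix r :: real
        show "(\<lambda>n. indicator {S n..} r * J x r) \<longlonglongrightarrow> indicator {0<..} r * J x r"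
        proof (cases "0 < r")
          case True
          have "\<forall>\<^sub>F n in sequentially. S n < r" using order_tendstoD(2)[OF S(3) True] .
          then have "\<forall>\<^sub>F n in sequentially. indicator {0<..} r * J x r = indicator {S n..} r * J x r"
            by eventually_elim (use True in \<open>auto simp: indicator_def\<close>)
          then show ?thesis by (rule Lim_transform_eventually[OF tendsto_const])
        next
          case False
          then have "indicator {S n..} r * J x r = indicator {0<..} r * J x r" for n
            using S(1)[of n] by (auto simp: indicator_def)
          then have e: "(\<lambda>n. indicator {S n..} r * J x r) = (\<lambda>n. indicator {0<..} r * J x r)" by (rule ext)
          show ?thesis unfolding e by (rule tendsto_const)
        qed
      qed
      show "AE r in lborel. norm (indicator {S n..} r * J x r) \<le> W r" for n
      proof (intro AE_I2)
        fix r :: real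
        show "norm (indicator {S n..} r * J x r) \<le> W r"
        proof (cases "S n \<le> r")
          case True
          then have "0 < r" using S(1)[of n] by linarith
          then show ?thesis using J_dom[of r x] True by simp
        qed (simp add: W_nonneg)
      qed
    qed measurable
  qed simp
  moreover have "\<forall>\<^sub>F \<kappa> in at_right 0. (LINT r|lborel. indicator {\<kappa>..} r * J x r) = (LINT r:{r. \<kappa> \<le> \<bar>r\<bar>}|lborel. I x r)"
    using eventually_at_right_less[of "0::real"] by eventually_elim (simp add: F_eq)
  ultimately show ?thesis by (rule Lim_transform_eventually)
qed

lemma A_op_eq: "A_op s \<mu> \<eta> x = L x"
proof -
  have "A_op s \<mu> \<eta> x = Lim (at_right 0) (\<lambda>\<kappa>. LINT r:{r. \<kappa> \<le> \<bar>r\<bar>}|lborel. I x r)"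
    unfolding A_op_def I_def ..
  also have "\<dots> = L x"
    by (rule tendsto_Lim[OF _ F_tendsto]) simp
  finally show ?thesis .
qed

lemma L_bound_W: "\<bar>L x\<bar> \<le> (LINT r|lborel. W r)"
proof -
  have "\<bar>L x\<bar> \<le> (LINT r|lborel. norm (indicator {0<..} r * J x r))"
    unfolding L_def real_norm_def[symmetric] by (rule integral_norm_bound)
  also have "\<dots> \<le> (LINT r|lborel. W r)"
  proof (rule integral_mono)
    show "integrable lborel W" by (rule W_int)
    show "norm (indicator {0<..} r * J x r) \<le> W r" for r :: real
      using J_dom[of r x] W_nonneg[of r] by (cases "0 < r") auto
    then show "integrable lborel (\<lambda>r. norm (indicator {0<..} r * J x r))"
      by (intro Bochner_Integration.integrable_bound[OF W_int]) (auto simp: W_nonneg)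
  qed
  finally show ?thesis .
qed


lemma L_meas: "L \<in> borel_measurable lborel"
proof -
  have "(\<lambda>x. LINT r|lborel. indicator {0<..} r * ((LINT \<theta>|\<mu>. (\<eta> x - \<eta> (x + r *\<^sub>R \<theta>)) / \<bar>r\<bar> powr (1 + 2 * s))
        + (LINT \<theta>|\<mu>. (\<eta> x - \<eta> (x + (-r) *\<^sub>R \<theta>)) / \<bar>-r\<bar> powr (1 + 2 * s)))) \<in> borel_measurable lborel"
    by measurable
  then show ?thesis unfolding L_def J_def I_def by (simp add: fun_eq_iff)
qed

lemma int_one_plus:
  fixes e :: real assumes "e < -1"
  shows "integrable lborel (\<lambda>r. (1 + \<bar>r\<bar>) powr e)"
proof -
  have i: "integrable lborel (\<lambda>r. indicator {1..} r * r powr e)" using int_pow_inf[of 1 e] assms by simp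
  have i1: "integrable lborel (\<lambda>r. indicator {1..} (1 + 1 * r) * (1 + 1 * r) powr e)"
    using lborel_integrable_real_affine[OF i, of 1 1] by simp
  have i2: "integrable lborel (\<lambda>r. indicator {1..} (1 + (-1) * r) * (1 + (-1) * r) powr e)"
    using lborel_integrable_real_affine[OF i, of "-1" 1] by simp
  show ?thesis
  proof (rule Bochner_Integration.integrable_bound[OF Bochner_Integration.integrable_add[OF i1 i2]])
    show "AE r in lborel. norm ((1 + \<bar>r\<bar>) powr e) \<le> norm (indicator {1..} (1 + 1 * r) * (1 + 1 * r) powr e + indicator {1..} (1 + (-1) * r) * (1 + (-1) * r) powr e)"
    proof (intro AE_I2)
      fix r :: real
      show "norm ((1 + \<bar>r\<bar>) powr e) \<le> norm (indicator {1..} (1 + 1 * r) * (1 + 1 * r) powr e + indicator {1..} (1 + (-1) * r) * (1 + (-1) * r) powr e)"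
        by (cases "0 \<le> r") (auto simp: indicator_def)
    qed
  qed measurable
qed

context
  fixes \<Omega> :: "'a set"
  assumes Om: "open \<Omega>"
begin

lemma Om_meas[measurable]: "\<Omega> \<in> sets borel" using Om by simp

definition H where "H x r = (LINT \<theta>|\<mu>. indicator \<Omega> (x + r *\<^sub>R \<theta>) * (1 + \<bar>r\<bar>) powr (-1 - 2 * s))"

lemma nu_H: "nu_star s \<mu> \<Omega> x = (LINT r|lborel. H x r)"
  unfolding nu_star_def H_def ..

lemma H_int_theta: "integrable \<mu> (\<lambda>\<theta>. indicator \<Omega> (x + r *\<^sub>R \<theta>) * (1 + \<bar>r\<bar>) powr (-1 - 2 * s))"
  by (rule mu.integrable_const_bound[where B = "(1 + \<bar>r\<bar>) powr (-1 - 2 * s)"]) (auto simp: indicator_def)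

lemma H_nonneg: "0 \<le> H x r"
  unfolding H_def by (rule integral_nonneg_AE) auto

lemma H_le: "H x r \<le> mS * (1 + \<bar>r\<bar>) powr (-1 - 2 * s)"
proof -
  have "H x r \<le> (LINT \<theta>|\<mu>. (1 + \<bar>r\<bar>) powr (-1 - 2 * s))"
    unfolding H_def by (rule integral_mono[OF H_int_theta]) (auto simp: indicator_def)
  then show ?thesis by simp
qed

lemma H_meas[measurable]: "(\<lambda>r. H x r) \<in> borel_measurable lborel"
  unfolding H_def by measurable

lemma H_int: "integrable lborel (\<lambda>r. H x r)"
proof (rule Bochner_Integration.integrable_bound)
  show "integrable lborel (\<lambda>r. mS * (1 + \<bar>r\<bar>) powr (-1 - 2 * s))"
    using int_one_plus[of "-1 - 2 * s"] s0 by (intro integrable_mult_right) auto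
  show "AE r in lborel. norm (H x r) \<le> norm (mS * (1 + \<bar>r\<bar>) powr (-1 - 2 * s))"
    using H_le[of x] H_nonneg[of x] by auto
qed measurable

lemma nu_nonneg: "0 \<le> nu_star s \<mu> \<Omega> x"
  unfolding nu_H by (rule integral_nonneg_AE) (auto simp: H_nonneg)

lemma nu_meas: "(\<lambda>x. nu_star s \<mu> \<Omega> x) \<in> borel_measurable lborel"
  unfolding nu_star_def by measurable


lemma nu_lower:
  assumes d: "0 < \<delta>" and inO: "\<And>r \<theta>. \<bar>r\<bar> < \<delta> \<Longrightarrow> norm \<theta> = 1 \<Longrightarrow> x + r *\<^sub>R \<theta> \<in> \<Omega>"
  shows "\<delta> * ((1 + \<delta>) powr (-1 - 2 * s) * mS) \<le> nu_star s \<mu> \<Omega> x"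
proof -
  let ?c = "(1 + \<delta>) powr (-1 - 2 * s) * mS"
  have le: "indicator {0<..<\<delta>} r * ?c \<le> H x r" for r :: real
  proof (cases "r \<in> {0<..<\<delta>}")
    case True
    have "H x r = (LINT \<theta>|\<mu>. (1 + \<bar>r\<bar>) powr (-1 - 2 * s))"
      unfolding H_def
    proof (rule integral_cong_AE)
      show "AE \<theta> in \<mu>. indicator \<Omega> (x + r *\<^sub>R \<theta>) * (1 + \<bar>r\<bar>) powr (-1 - 2 * s) = (1 + \<bar>r\<bar>) powr (-1 - 2 * s)"
        using sph by eventually_elim (use True inO in auto)
    qed measurable
    also have "\<dots> = mS * (1 + r) powr (-1 - 2 * s)" using True by simp
    also have "\<dots> \<ge> mS * (1 + \<delta>) powr (-1 - 2 * s)"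
      using True s0 by (intro mult_left_mono powr_mono2') auto
    finally show ?thesis using True by (simp add: mult.commute)
  next
    case False then show ?thesis using H_nonneg[of x r] by simp
  qed
  have "(LINT r|lborel. indicator {0<..<\<delta>} r * ?c) \<le> (LINT r|lborel. H x r)"
  proof (rule integral_mono[OF _ H_int le])
    show "integrable lborel (\<lambda>r. indicator {0<..<\<delta>} r * ?c)"
      using d by (intro integrable_mult_left integrable_real_indicator) (auto simp: emeasure_lborel_Ioo)
  qed
  moreover have "(LINT r|lborel. indicator {0<..<\<delta>} r * ?c) = \<delta> * ?c"
    using d by simp
  ultimately show ?thesis unfolding nu_H by linarith
qed

lemma I_far:
  assumes d: "0 < \<delta>" and ex: "\<eta> x = 0"
    and z: "\<And>r \<theta>. \<bar>r\<bar> < \<delta> \<Longrightarrow> norm \<theta> = 1 \<Longrightarrow> \<eta> (x + r *\<^sub>R \<theta>) = 0"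
    and out: "\<And>y. y \<notin> \<Omega> \<Longrightarrow> \<eta> y = 0"
  shows "\<bar>I x r\<bar> \<le> N * (1 + 1 / \<delta>) powr (1 + 2 * s) * H x r"
proof -
  let ?C = "N * (1 + 1 / \<delta>) powr (1 + 2 * s)"
  have "\<bar>I x r\<bar> \<le> (LINT \<theta>|\<mu>. norm ((\<eta> x - \<eta> (x + r *\<^sub>R \<theta>)) / \<bar>r\<bar> powr (1 + 2 * s)))"
    unfolding I_def real_norm_def[symmetric] by (rule integral_norm_bound)
  also have "\<dots> \<le> (LINT \<theta>|\<mu>. ?C * (indicator \<Omega> (x + r *\<^sub>R \<theta>) * (1 + \<bar>r\<bar>) powr (-1 - 2 * s)))"
  proof (rule integral_mono_AE)
    show "integrable \<mu> (\<lambda>\<theta>. norm ((\<eta> x - \<eta> (x + r *\<^sub>R \<theta>)) / \<bar>r\<bar> powr (1 + 2 * s)))"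
      using I_int by (rule integrable_norm)
    show "integrable \<mu> (\<lambda>\<theta>. ?C * (indicator \<Omega> (x + r *\<^sub>R \<theta>) * (1 + \<bar>r\<bar>) powr (-1 - 2 * s)))"
      using H_int_theta by (rule integrable_mult_right)
    show "AE \<theta> in \<mu>. norm ((\<eta> x - \<eta> (x + r *\<^sub>R \<theta>)) / \<bar>r\<bar> powr (1 + 2 * s))
        \<le> ?C * (indicator \<Omega> (x + r *\<^sub>R \<theta>) * (1 + \<bar>r\<bar>) powr (-1 - 2 * s))"
      using sph
    proof eventually_elim
      fix \<theta> :: 'a assume th: "norm \<theta> = 1"
      have C0: "0 \<le> ?C" using N0 by simp
      show "norm ((\<eta> x - \<eta> (x + r *\<^sub>R \<theta>)) / \<bar>r\<bar> powr (1 + 2 * s))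
        \<le> ?C * (indicator \<Omega> (x + r *\<^sub>R \<theta>) * (1 + \<bar>r\<bar>) powr (-1 - 2 * s))"
      proof (cases "\<bar>r\<bar> < \<delta> \<or> x + r *\<^sub>R \<theta> \<notin> \<Omega>")
        case True
        then have "\<eta> (x + r *\<^sub>R \<theta>) = 0" using z th out by blast
        then show ?thesis using ex C0 by (simp add: indicator_def)
      next
        case False
        then have r: "\<delta> \<le> \<bar>r\<bar>" and inO: "x + r *\<^sub>R \<theta> \<in> \<Omega>" by auto
        then have rp: "0 < \<bar>r\<bar>" using d by linarith
        have "1 + \<bar>r\<bar> \<le> (1 + 1 / \<delta>) * \<bar>r\<bar>"
          using r d by (simp add: field_simps)
        then have "(1 + \<bar>r\<bar>) powr (1 + 2 * s) \<le> ((1 + 1 / \<delta>) * \<bar>r\<bar>) powr (1 + 2 * s)"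
          using s0 by (intro powr_mono2) auto
        also have "\<dots> = (1 + 1 / \<delta>) powr (1 + 2 * s) * \<bar>r\<bar> powr (1 + 2 * s)"
          using d by (simp add: powr_mult)
        finally have key: "(1 + \<bar>r\<bar>) powr (1 + 2 * s) \<le> (1 + 1 / \<delta>) powr (1 + 2 * s) * \<bar>r\<bar> powr (1 + 2 * s)" .
        have eq: "(1 + \<bar>r\<bar>) powr (-1 - 2 * s) = 1 / (1 + \<bar>r\<bar>) powr (1 + 2 * s)"
          using powr_minus_divide[of "1 + \<bar>r\<bar>" "1 + 2 * s"] by (simp add: algebra_simps)
        have "norm ((\<eta> x - \<eta> (x + r *\<^sub>R \<theta>)) / \<bar>r\<bar> powr (1 + 2 * s)) \<le> N / \<bar>r\<bar> powr (1 + 2 * s)"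
          using ex Nb[of "x + r *\<^sub>R \<theta>"] by (simp add: divide_right_mono)
        also have "\<dots> \<le> ?C / (1 + \<bar>r\<bar>) powr (1 + 2 * s)"
        proof -
          have p1: "0 < (1 + \<bar>r\<bar>) powr (1 + 2 * s)" by simp
          have p2: "0 < \<bar>r\<bar> powr (1 + 2 * s)" using rp by simp
          have "N * (1 + \<bar>r\<bar>) powr (1 + 2 * s) \<le> N * ((1 + 1 / \<delta>) powr (1 + 2 * s) * \<bar>r\<bar> powr (1 + 2 * s))"
            using key N0 by (rule mult_left_mono)
          then show ?thesis using p1 p2 by (simp add: divide_simps mult.assoc)
        qed
        also have "\<dots> = ?C * (indicator \<Omega> (x + r *\<^sub>R \<theta>) * (1 + \<bar>r\<bar>) powr (-1 - 2 * s))"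
          using inO by (simp add: eq)
        finally show ?thesis .
      qed
    qed
  qed
  also have "\<dots> = ?C * H x r" unfolding H_def by simp
  finally show ?thesis .
qed

lemma L_far:
  assumes d: "0 < \<delta>" and ex: "\<eta> x = 0"
    and z: "\<And>r \<theta>. \<bar>r\<bar> < \<delta> \<Longrightarrow> norm \<theta> = 1 \<Longrightarrow> \<eta> (x + r *\<^sub>R \<theta>) = 0"
    and out: "\<And>y. y \<notin> \<Omega> \<Longrightarrow> \<eta> y = 0"
  shows "\<bar>L x\<bar> \<le> 2 * (N * (1 + 1 / \<delta>) powr (1 + 2 * s)) * nu_star s \<mu> \<Omega> x"
proof -
  let ?C = "N * (1 + 1 / \<delta>) powr (1 + 2 * s)"
  have C0: "0 \<le> ?C" using N0 by simp
  have Hm: "integrable lborel (\<lambda>r. H x (-r))"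
    using lborel_integrable_real_affine[OF H_int[of x], of "-1" 0] by simp
  have Hm_eq: "(LINT r|lborel. H x (-r)) = (LINT r|lborel. H x r)"
    using lborel_integral_real_affine[of "-1" "\<lambda>r. H x r" 0] by simp
  have pt: "norm (indicator {0<..} r * J x r) \<le> ?C * (H x r + H x (-r))" for r
  proof -
    have "norm (indicator {0<..} r * J x r) \<le> \<bar>J x r\<bar>" by (simp add: indicator_def)
    also have "\<dots> \<le> \<bar>I x r\<bar> + \<bar>I x (-r)\<bar>" unfolding J_def by (rule abs_triangle_ineq)
    also have "\<dots> \<le> ?C * H x r + ?C * H x (-r)"
      by (intro add_mono I_far[OF d ex z out]) auto
    finally show ?thesis by (simp add: distrib_left)
  qed
  have "\<bar>L x\<bar> \<le> (LINT r|lborel. norm (indicator {0<..} r * J x r))"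
    unfolding L_def real_norm_def[symmetric] by (rule integral_norm_bound)
  also have "\<dots> \<le> (LINT r|lborel. ?C * (H x r + H x (-r)))"
  proof (rule integral_mono[OF _ _ pt])
    show i: "integrable lborel (\<lambda>r. ?C * (H x r + H x (-r)))"
      by (intro integrable_mult_right Bochner_Integration.integrable_add H_int Hm)
    show "integrable lborel (\<lambda>r. norm (indicator {0<..} r * J x r))"
      by (rule Bochner_Integration.integrable_bound[OF i]) (use pt C0 H_nonneg in \<open>auto intro!: AE_I2\<close>)
  qed
  also have "\<dots> = ?C * ((LINT r|lborel. H x r) + (LINT r|lborel. H x (-r)))"
    using Bochner_Integration.integral_add[OF H_int[of x] Hm] by simp
  also have "\<dots> = 2 * ?C * nu_star s \<mu> \<Omega> x" unfolding Hm_eq nu_H by simp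
  finally show ?thesis .
qed

end

end

theorem lemma2p4:
  fixes s :: real and \<mu> :: "'a::euclidean_space measure" and \<Omega> :: "'a set"
    and u \<eta> :: "'a \<Rightarrow> real"
  assumes "0 < s" "s < 1"
    and "finite_measure \<mu>" "sets \<mu> = sets borel" "emeasure \<mu> (- sphere 0 1) = 0"
    and "open \<Omega>" "bounded \<Omega>"
    and "set_integrable lborel \<Omega> u"
    and "integrable lborel (\<lambda>x. nu_star s \<mu> \<Omega> x * u x)"
    and "Cc_inf \<Omega> \<eta>"
  shows "integrable lborel (\<lambda>x. u x * A_op s \<mu> \<eta> x)"
proof -
  let ?S = "closure {x. \<eta> x \<noteq> 0}"
  have sm: "\<And>vs x. dderiv vs \<eta> differentiable (at x)" and cpt: "compact ?S" and sub: "?S \<subseteq> \<Omega>"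
    using assms(10) unfolding Cc_inf_def smooth_def by auto
  have cont: "continuous_on UNIV \<eta>"
    using sm[of "[]"] by (intro continuous_at_imp_continuous_on ballI differentiable_imp_continuous_within) auto
  obtain N where Nb: "\<And>x. \<bar>\<eta> x\<bar> \<le> N" using Cc_inf_dderiv_bounded[OF assms(10), of "[]"] by auto
  obtain M where M0: "0 \<le> M" and Mb: "\<And>x h. \<bar>\<eta> (x + h) + \<eta> (x + (-1) *\<^sub>R h) - 2 * \<eta> x\<bar> \<le> M * (norm h)\<^sup>2"
    using Cc_inf_second_diff[OF assms(10)] by blast
  have sph: "AE \<theta> in \<mu>. norm \<theta> = 1"
  proof (rule AE_I')
    have "- sphere (0::'a) 1 \<in> sets \<mu>" unfolding assms(4) by (intro borel_comp borel_closed) simp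
    then show "- sphere 0 1 \<in> null_sets \<mu>" using assms(5) by (simp add: null_sets_def)
    show "{x \<in> space \<mu>. \<not> norm x = 1} \<subseteq> - sphere 0 1" by auto
  qed
  interpret P: pv_ctx s \<mu> \<eta> N M
    by (intro pv_ctx.intro assms(1-4) cont Nb Mb M0 sph)
  have dis: "?S \<inter> - \<Omega> = {}" using sub by blast
  obtain d where d: "d > 0" "\<forall>x\<in>?S. \<forall>y\<in>-\<Omega>. d \<le> dist x y"
    using separate_compact_closed[OF cpt _ dis] assms(6) by (auto simp: closed_Compl)
  define \<delta> where "\<delta> = d / 2"
  have \<delta>: "0 < \<delta>" using d by (simp add: \<delta>_def)
  define c where "c = \<delta> * (1 + \<delta>) powr (-1 - 2 * s)"
  have c: "0 < c" using \<delta> by (simp add: c_def)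
  define W1 where "W1 r = M * (indicator {0<..1} r * r powr (1 - 2 * s)) + 4 * N * (indicator {1..} r * r powr (-1 - 2 * s))" for r :: real
  define Q' where "Q' = (LINT r|lborel. W1 r)"
  have Q'0: "0 \<le> Q'" unfolding Q'_def W1_def using M0 P.N0
    by (intro integral_nonneg_AE AE_I2 add_nonneg_nonneg mult_nonneg_nonneg) (auto simp: indicator_def)
  have QW: "(LINT r|lborel. P.W r) = P.mS * Q'" unfolding P.W_def Q'_def W1_def by simp
  define K where "K = Q' / c + 2 * (N * (1 + 1 / \<delta>) powr (1 + 2 * s))"
  have nu0: "\<And>x. 0 \<le> nu_star s \<mu> \<Omega> x" using P.nu_nonneg[OF assms(6)] .
  have dist_line: "dist x (x + r *\<^sub>R \<theta>) = \<bar>r\<bar>" if "norm \<theta> = 1" for x r and \<theta> :: 'a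
    using that by (simp add: dist_norm)
  have bound: "\<bar>P.L x\<bar> \<le> K * nu_star s \<mu> \<Omega> x" for x
  proof (cases "\<exists>y\<in>?S. dist x y < \<delta>")
    case True
    then obtain y where y: "y \<in> ?S" "dist x y < \<delta>" by blast
    have inO: "x + r *\<^sub>R \<theta> \<in> \<Omega>" if "\<bar>r\<bar> < \<delta>" "norm \<theta> = 1" for r \<theta>
    proof (rule ccontr)
      assume "x + r *\<^sub>R \<theta> \<notin> \<Omega>"
      then have "d \<le> dist y (x + r *\<^sub>R \<theta>)" using d y by auto
      moreover have "dist y (x + r *\<^sub>R \<theta>) \<le> dist y x + dist x (x + r *\<^sub>R \<theta>)" by (rule dist_triangle)
      ultimately show False using y that dist_line[OF that(2), of x r] by (simp add: \<delta>_def dist_commute)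
    qed
    have low: "c * P.mS \<le> nu_star s \<mu> \<Omega> x"
      using P.nu_lower[OF assms(6) \<delta> inO] by (simp add: c_def mult.assoc)
    have "\<bar>P.L x\<bar> \<le> P.mS * Q'" using P.L_bound_W[of x] QW by simp
    also have "\<dots> = (Q' / c) * (c * P.mS)" using c by simp
    also have "\<dots> \<le> (Q' / c) * nu_star s \<mu> \<Omega> x" using low Q'0 c by (intro mult_left_mono) auto
    also have "\<dots> \<le> K * nu_star s \<mu> \<Omega> x" unfolding K_def using nu0[of x] P.N0
      by (intro mult_right_mono) auto
    finally show ?thesis .
  next
    case False
    have notS: "\<eta> z = 0" if "z \<notin> ?S" for z using that closure_subset[of "{x. \<eta> x \<noteq> 0}"] by blast
    have ex: "\<eta> x = 0" using False \<delta> by (intro notS) force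
    have z: "\<eta> (x + r *\<^sub>R \<theta>) = 0" if "\<bar>r\<bar> < \<delta>" "norm \<theta> = 1" for r \<theta>
      using False that dist_line[OF that(2), of x r] by (intro notS) force
    have out: "\<eta> y = 0" if "y \<notin> \<Omega>" for y using that sub by (intro notS) blast
    have "\<bar>P.L x\<bar> \<le> 2 * (N * (1 + 1 / \<delta>) powr (1 + 2 * s)) * nu_star s \<mu> \<Omega> x"
      by (rule P.L_far[OF assms(6) \<delta> ex z out]) auto
    also have "\<dots> \<le> K * nu_star s \<mu> \<Omega> x" unfolding K_def using nu0[of x] Q'0 c
      by (intro mult_right_mono) auto
    finally show ?thesis .
  qed
  have eqf: "u x * A_op s \<mu> \<eta> x = (nu_star s \<mu> \<Omega> x * u x) * (P.L x / nu_star s \<mu> \<Omega> x)" for x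
  proof (cases "nu_star s \<mu> \<Omega> x = 0")
    case True
    then have "P.L x = 0" using bound[of x] by simp
    then show ?thesis using True by (simp add: P.A_op_eq)
  next
    case False
    then show ?thesis by (simp add: P.A_op_eq)
  qed
  have meas_nu: "(\<lambda>x. nu_star s \<mu> \<Omega> x) \<in> borel_measurable lborel" by (rule P.nu_meas[OF assms(6)])
  have meas_L: "P.L \<in> borel_measurable lborel" by (rule P.L_meas)
  have meas_nuu: "(\<lambda>x. nu_star s \<mu> \<Omega> x * u x) \<in> borel_measurable lborel"
    using assms(9) by (rule borel_measurable_integrable)
  show ?thesis
  proof (rule Bochner_Integration.integrable_bound)
    show "integrable lborel (\<lambda>x. K * (nu_star s \<mu> \<Omega> x * u x))"
      using assms(9) by (rule integrable_mult_right)
    show "(\<lambda>x. u x * A_op s \<mu> \<eta> x) \<in> borel_measurable lborel"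
      unfolding eqf using meas_nu meas_L meas_nuu by measurable
    show "AE x in lborel. norm (u x * A_op s \<mu> \<eta> x) \<le> norm (K * (nu_star s \<mu> \<Omega> x * u x))"
    proof (intro AE_I2)
      fix x
      have K0: "0 \<le> K" unfolding K_def using Q'0 c P.N0 by auto
      have "norm (u x * A_op s \<mu> \<eta> x) = \<bar>u x\<bar> * \<bar>P.L x\<bar>" by (simp add: P.A_op_eq abs_mult)
      also have "\<dots> \<le> \<bar>u x\<bar> * (K * nu_star s \<mu> \<Omega> x)" by (intro mult_left_mono bound) auto
      also have "\<dots> = norm (K * (nu_star s \<mu> \<Omega> x * u x))" using K0 nu0[of x] by (simp add: abs_mult)
      finally show "norm (u x * A_op s \<mu> \<eta> x) \<le> norm (K * (nu_star s \<mu> \<Omega> x * u x))" .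
    qed
  qed
qed

end
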